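(* Let $(X_n)_{n\ge1}$ be i.i.d. random variables in $S$ and $X^{(n)}=X_n\cdots X_1$. Then the condition $\mathbb P\bigl(\bigcup_{n\ge1}[X^{(n)}\in S^\circ]\bigr)>0$ is equivalent to $\mathbb P[T<+\infty]=1$. Moreover, for every $\omega$ with $T(\omega)<+\infty$: (i) $X^{(n)}(\omega)\in S^\circ$ for all $n\ge T(\omega)$; (ii) setting, for $n\ge1$, $D_n(\omega)=\sup\bigl\{\,\bigl|1_{[T\le n]}(\omega)\ln\langle y,X^{(n)}(\omega)x\rangle-\ln\|Y^{(n)}(\omega)y\|\bigr| : x,y\in\overline B\bigr\}$, one has $\sup_{n\ge1}D_n(\omega)<+\infty$; (iii) setting $\chi=\frac1q\vec{\mathbf 1}$ and $\widetilde D_n(\omega)=\bigl|\ln\Lambda_n(\omega)-\ln\|Y^{(n)}(\omega)\chi\|\bigr|$, one has $\sup_{n\ge1}\widetilde D_n(\omega)<+\infty$.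
   Context: $S$ is the semigroup of real $q\times q$ matrices with nonnegative entries such that every row and every column contains a strictly positive entry; $S^\circ$ the subset of matrices with all entries strictly positive. $\|x\|=\sum_i|x_i|$ on $\mathbb R^q$; $\overline C$ is the closed nonnegative orthant and $\overline B=\{x\in\overline C:\|x\|=1\}$; $\vec{\mathbf 1}$ is the vector with all entries $1$. $T=\inf\{n\ge1:X^{(n)}\in S^\circ\}$, and $1_{[T\le n]}\ln\langle y,X^{(n)}x\rangle$ is taken to be $0$ on $[T>n]$. $Y_n=X_n^*$ (transpose) and $Y^{(n)}=Y_1\cdots Y_n=(X^{(n)})^*$. $\Lambda_n$ is the spectral radius of $X^{(n)}$. *)

theory Defs
  imports "HOL-Probability.Probability"
begin

definition inS :: "real^'q^'q \<Rightarrow> bool" where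
  "inS A \<longleftrightarrow> (\<forall>i j. A $ i $ j \<ge> 0) \<and> (\<forall>i. \<exists>j. A $ i $ j > 0) \<and> (\<forall>j. \<exists>i. A $ i $ j > 0)"

definition inS_pos :: "real^'q^'q \<Rightarrow> bool" where
  "inS_pos A \<longleftrightarrow> inS A \<and> (\<forall>i j. A $ i $ j > 0)"

definition l1norm :: "real^'q \<Rightarrow> real" where
  "l1norm x = (\<Sum>i\<in>UNIV. \<bar>x $ i\<bar>)"

definition Bbar :: "(real^'q) set" where
  "Bbar = {x. (\<forall>i. x $ i \<ge> 0) \<and> l1norm x = 1}"

fun Xprod :: "(nat \<Rightarrow> 'a \<Rightarrow> real^'q^'q) \<Rightarrow> nat \<Rightarrow> 'a \<Rightarrow> real^'q^'q" where
  "Xprod X 0 \<omega> = mat 1"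
| "Xprod X (Suc n) \<omega> = X (Suc n) \<omega> ** Xprod X n \<omega>"

text \<open>Y^(n) = (X^(n))^* = Y_1 ... Y_n.\<close>
definition Yprod :: "(nat \<Rightarrow> 'a \<Rightarrow> real^'q^'q) \<Rightarrow> nat \<Rightarrow> 'a \<Rightarrow> real^'q^'q" where
  "Yprod X n \<omega> = transpose (Xprod X n \<omega>)"

definition hitT :: "(nat \<Rightarrow> 'a \<Rightarrow> real^'q^'q) \<Rightarrow> 'a \<Rightarrow> enat" where
  "hitT X \<omega> = (if \<exists>n\<ge>1. inS_pos (Xprod X n \<omega>)
                then enat (LEAST n. n \<ge> 1 \<and> inS_pos (Xprod X n \<omega>)) else \<infinity>)"

definition cmat :: "real^'q^'q \<Rightarrow> complex^'q^'q" where
  "cmat A = (\<chi> i j. complex_of_real (A $ i $ j))"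

definition spec_rad :: "real^'q^'q \<Rightarrow> real" where
  "spec_rad A = Max {cmod l | l. \<exists>v::complex^'q. v \<noteq> 0 \<and> cmat A *v v = l *s v}"

end

theory Submission
  imports Defs "HOL-Computational_Algebra.Polynomial"
begin


definition rowpos :: "real^'q^'q \<Rightarrow> bool" where
  "rowpos A \<longleftrightarrow> (\<forall>i j. A $ i $ j \<ge> 0) \<and> (\<forall>i. \<exists>j. A $ i $ j > 0)"
definition colpos :: "real^'q^'q \<Rightarrow> bool" where
  "colpos A \<longleftrightarrow> (\<forall>i j. A $ i $ j \<ge> 0) \<and> (\<forall>j. \<exists>i. A $ i $ j > 0)"
definition allpos :: "real^'q^'q \<Rightarrow> bool" where
  "allpos A \<longleftrightarrow> (\<forall>i j. A $ i $ j > 0)"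

lemma inS_pos_iff: "inS_pos A \<longleftrightarrow> allpos A"
  unfolding inS_pos_def inS_def allpos_def by (auto intro: less_imp_le)

lemma inS_rowpos: "inS A \<Longrightarrow> rowpos A" unfolding inS_def rowpos_def by auto
lemma inS_colpos: "inS A \<Longrightarrow> colpos A" unfolding inS_def colpos_def by auto

lemma rowpos_mat1: "rowpos (mat 1)"
  unfolding rowpos_def by (auto simp: mat_def)
lemma colpos_mat1: "colpos (mat 1)"
  unfolding colpos_def by (auto simp: mat_def)

lemma rowpos_mult:
  assumes "rowpos A" "rowpos B" shows "rowpos (A ** B)"
proof -
  have nn: "\<And>i j. (A ** B) $ i $ j \<ge> 0"
    using assms unfolding rowpos_def matrix_matrix_mult_def by (auto intro!: sum_nonneg)
  have "\<exists>l. (A ** B) $ i $ l > 0" for i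
  proof -
    obtain k where k: "A $ i $ k > 0" using assms unfolding rowpos_def by blast
    obtain l where l: "B $ k $ l > 0" using assms unfolding rowpos_def by blast
    have "(A ** B) $ i $ l = (\<Sum>m\<in>UNIV. A $ i $ m * B $ m $ l)"
      unfolding matrix_matrix_mult_def by simp
    also have "\<dots> > 0"
      by (rule sum_pos2[where i=k]) (use assms k l in \<open>auto simp: rowpos_def\<close>)
    finally show ?thesis by blast
  qed
  then show ?thesis using nn unfolding rowpos_def by auto
qed

lemma colpos_mult:
  assumes "colpos A" "colpos B" shows "colpos (A ** B)"
proof -
  have nn: "\<And>i j. (A ** B) $ i $ j \<ge> 0"
    using assms unfolding colpos_def matrix_matrix_mult_def by (auto intro!: sum_nonneg)
  have "\<exists>i. (A ** B) $ i $ l > 0" for l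
  proof -
    obtain k where k: "B $ k $ l > 0" using assms unfolding colpos_def by blast
    obtain i where i: "A $ i $ k > 0" using assms unfolding colpos_def by blast
    have "(A ** B) $ i $ l = (\<Sum>m\<in>UNIV. A $ i $ m * B $ m $ l)"
      unfolding matrix_matrix_mult_def by simp
    also have "\<dots> > 0"
      by (rule sum_pos2[where i=k]) (use assms k i in \<open>auto simp: colpos_def\<close>)
    finally show ?thesis by blast
  qed
  then show ?thesis using nn unfolding colpos_def by auto
qed

lemma rowpos_allpos:
  assumes "rowpos A" "allpos B" shows "allpos (A ** B)"
  unfolding allpos_def
proof (intro allI)
  fix i l
  obtain k where k: "A $ i $ k > 0" using assms unfolding rowpos_def by blast
  have "(A ** B) $ i $ l = (\<Sum>m\<in>UNIV. A $ i $ m * B $ m $ l)"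
    unfolding matrix_matrix_mult_def by simp
  also have "\<dots> > 0"
    by (rule sum_pos2[where i=k]) (use assms k in \<open>auto simp: rowpos_def allpos_def less_imp_le intro!: mult_nonneg_nonneg\<close>)
  finally show "(A ** B) $ i $ l > 0" .
qed

lemma allpos_colpos:
  assumes "allpos A" "colpos B" shows "allpos (A ** B)"
  unfolding allpos_def
proof (intro allI)
  fix i l
  obtain k where k: "B $ k $ l > 0" using assms unfolding colpos_def by blast
  have "(A ** B) $ i $ l = (\<Sum>m\<in>UNIV. A $ i $ m * B $ m $ l)"
    unfolding matrix_matrix_mult_def by simp
  also have "\<dots> > 0"
    by (rule sum_pos2[where i=k]) (use assms k in \<open>auto simp: colpos_def allpos_def less_imp_le intro!: mult_nonneg_nonneg\<close>)
  finally show "(A ** B) $ i $ l > 0" .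
qed




fun blk :: "(nat \<Rightarrow> real^'q^'q) \<Rightarrow> nat \<Rightarrow> nat \<Rightarrow> real^'q^'q" where
  "blk f a 0 = mat 1"
| "blk f a (Suc d) = f (a + Suc d) ** blk f a d"

lemma Xprod_split: "Xprod X (a + d) \<omega> = blk (\<lambda>i. X i \<omega>) a d ** Xprod X a \<omega>"
  by (induction d) (simp_all add: matrix_mul_assoc)

lemma Xprod_blk: "Xprod X d \<omega> = blk (\<lambda>i. X i \<omega>) 0 d"
  using Xprod_split[of X 0 d \<omega>] by simp

lemma blk_cong: "(\<And>i. a < i \<Longrightarrow> i \<le> a + d \<Longrightarrow> f i = g i) \<Longrightarrow> blk f a d = blk g a d"
  by (induction d) auto

lemma blk_rowpos: "(\<And>i. a < i \<Longrightarrow> i \<le> a + d \<Longrightarrow> rowpos (f i)) \<Longrightarrow> rowpos (blk f a d)"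
  by (induction d) (auto simp: rowpos_mat1 intro!: rowpos_mult)

lemma blk_colpos: "(\<And>i. a < i \<Longrightarrow> i \<le> a + d \<Longrightarrow> colpos (f i)) \<Longrightarrow> colpos (blk f a d)"
  by (induction d) (auto simp: colpos_mat1 intro!: colpos_mult)

lemma l1norm_nonneg_eq: "(\<And>i. x $ i \<ge> 0) \<Longrightarrow> l1norm x = (\<Sum>i\<in>UNIV. x $ i)"
  unfolding l1norm_def by simp

lemma Bbar_pos_ex: assumes "x \<in> Bbar" obtains i where "x $ i > 0"
proof -
  have "(\<Sum>i\<in>UNIV. x $ i) = 1" using assms unfolding Bbar_def l1norm_def by auto
  then have "\<exists>i. x $ i \<noteq> 0" by (metis (no_types) sum.neutral zero_neq_one)
  then obtain i where "x $ i \<noteq> 0" by blast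
  moreover have "x $ i \<ge> 0" using assms unfolding Bbar_def by auto
  ultimately show ?thesis using that by (simp add: order_less_le)
qed

lemma Bbar_sum: "x \<in> Bbar \<Longrightarrow> (\<Sum>i\<in>UNIV. x $ i) = 1"
  unfolding Bbar_def l1norm_def by auto
lemma Bbar_nn: "x \<in> Bbar \<Longrightarrow> x $ i \<ge> 0"
  unfolding Bbar_def by auto

lemma ln_ratio_bound:
  fixes u L a b s q :: real
  assumes "0 < a" "a \<le> b" "1 \<le> q" "0 < s"
    and "a * s \<le> u" "u \<le> b * s" "q * a * s \<le> L" "L \<le> q * b * s"
  shows "\<bar>ln u - ln L\<bar> \<le> ln (q * b / a)"
proof -
  have as: "a * s > 0" using assms by simp
  have qas: "q * a * s > 0" using assms by simp
  have u: "u > 0" using assms as by linarith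
  have L: "L > 0" using assms qas by linarith
  have b0: "b \<ge> 0" using assms by linarith
  have qb: "b \<le> q * b" using assms b0 mult_right_mono[of 1 q b] by simp
  have qa: "a \<le> q * a" using assms mult_right_mono[of 1 q a] by simp
  have r1: "u / L \<le> q * b / a"
  proof -
    have "u / L \<le> (b * s) / (q * a * s)"
      using assms u L by (intro frac_le) (auto intro!: mult_pos_pos)
    also have "\<dots> = b / (q * a)" using assms by simp
    also have "\<dots> \<le> b / a" using assms qa b0 by (intro divide_left_mono) auto
    also have "\<dots> \<le> q * b / a" using assms qb by (intro divide_right_mono) auto
    finally show ?thesis .
  qed
  have r2: "L / u \<le> q * b / a"
  proof -
    have "L / u \<le> (q * b * s) / (a * s)"
      using assms u L by (intro frac_le) (auto intro!: mult_pos_pos)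
    also have "\<dots> = q * b / a" using assms by simp
    finally show ?thesis .
  qed
  have "ln u - ln L = ln (u / L)" using u L by (simp add: ln_div)
  moreover have "ln L - ln u = ln (L / u)" using u L by (simp add: ln_div)
  moreover have qba: "q * b / a > 0" using assms by simp
  moreover have "ln (u / L) \<le> ln (q * b / a)" using r1 u L qba by (subst ln_le_cancel_iff) auto
  moreover have "ln (L / u) \<le> ln (q * b / a)" using r2 u L qba by (subst ln_le_cancel_iff) auto
  ultimately show ?thesis by linarith
qed

lemma main_bound:
  fixes Q P :: "real^'q^'q"
  assumes Q: "rowpos Q" and a: "0 < a" and Pa: "\<And>i j. a \<le> P $ i $ j" and Pb: "\<And>i j. P $ i $ j \<le> b"
    and x: "x \<in> Bbar" and y: "y \<in> Bbar"
  shows "\<bar>ln (y \<bullet> ((Q ** P) *v x)) - ln (l1norm (transpose (Q ** P) *v y))\<bar>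
           \<le> ln (real CARD('q) * b / a)"
proof -
  define w where "w k = (\<Sum>i\<in>UNIV. Q $ i $ k * y $ i)" for k
  define s where "s = (\<Sum>k\<in>UNIV. w k)"
  define v where "v = transpose (Q ** P) *v y"
  have Qnn: "Q $ i $ j \<ge> 0" for i j using Q unfolding rowpos_def by auto
  have ynn: "y $ i \<ge> 0" for i using y by (rule Bbar_nn)
  have xnn: "x $ i \<ge> 0" for i using x by (rule Bbar_nn)
  have wnn: "w k \<ge> 0" for k unfolding w_def using Qnn ynn by (auto intro!: sum_nonneg)
  have v_eq: "v $ j = (\<Sum>k\<in>UNIV. P $ k $ j * w k)" for j
  proof -
    have "v $ j = (\<Sum>i\<in>UNIV. \<Sum>k\<in>UNIV. Q $ i $ k * P $ k $ j * y $ i)"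
      unfolding v_def by (simp add: matrix_vector_mult_def transpose_def matrix_matrix_mult_def sum_distrib_right)
    also have "\<dots> = (\<Sum>k\<in>UNIV. \<Sum>i\<in>UNIV. Q $ i $ k * P $ k $ j * y $ i)"
      by (rule sum.swap)
    also have "\<dots> = (\<Sum>k\<in>UNIV. P $ k $ j * w k)"
      unfolding w_def by (simp add: sum_distrib_left mult_ac)
    finally show ?thesis .
  qed
  have u_eq: "y \<bullet> ((Q ** P) *v x) = (\<Sum>j\<in>UNIV. v $ j * x $ j)"
  proof -
    have "y \<bullet> ((Q ** P) *v x) = (\<Sum>i\<in>UNIV. \<Sum>j\<in>UNIV. y $ i * (Q ** P) $ i $ j * x $ j)"
      by (simp add: inner_vec_def matrix_vector_mult_def sum_distrib_left mult_ac)
    also have "\<dots> = (\<Sum>j\<in>UNIV. \<Sum>i\<in>UNIV. y $ i * (Q ** P) $ i $ j * x $ j)"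
      by (rule sum.swap)
    also have "\<dots> = (\<Sum>j\<in>UNIV. v $ j * x $ j)"
      unfolding v_def by (simp add: matrix_vector_mult_def transpose_def sum_distrib_right sum_distrib_left mult_ac)
    finally show ?thesis .
  qed
  have s_pos: "s > 0"
  proof -
    obtain i where i: "y $ i > 0" using Bbar_pos_ex[OF y] by blast
    obtain k where k: "Q $ i $ k > 0" using Q unfolding rowpos_def by blast
    have "w k > 0" unfolding w_def
      by (rule sum_pos2[where i=i]) (use i k Qnn ynn in auto)
    then show ?thesis unfolding s_def by (intro sum_pos2[where i=k]) (auto simp: wnn)
  qed
  have vlo: "a * s \<le> v $ j" for j
  proof -
    have "a * s = (\<Sum>k\<in>UNIV. a * w k)" unfolding s_def by (simp add: sum_distrib_left)
    also have "\<dots> \<le> (\<Sum>k\<in>UNIV. P $ k $ j * w k)"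
      by (intro sum_mono mult_right_mono Pa wnn)
    finally show ?thesis by (simp add: v_eq)
  qed
  have vhi: "v $ j \<le> b * s" for j
  proof -
    have "(\<Sum>k\<in>UNIV. P $ k $ j * w k) \<le> (\<Sum>k\<in>UNIV. b * w k)"
      by (intro sum_mono mult_right_mono Pb wnn)
    also have "\<dots> = b * s" unfolding s_def by (simp add: sum_distrib_left)
    finally show ?thesis by (simp add: v_eq)
  qed
  have ab: "a \<le> b" using Pa Pb order_trans by blast
  have vnn: "v $ j \<ge> 0" for j using vlo[of j] a s_pos mult_pos_pos[of a s] by linarith
  have L_eq: "l1norm v = (\<Sum>j\<in>UNIV. v $ j)" by (rule l1norm_nonneg_eq[OF vnn])
  have Llo: "real CARD('q) * a * s \<le> l1norm v"
    unfolding L_eq using sum_mono[of UNIV "\<lambda>_. a * s" "\<lambda>j. v $ j", OF vlo] by (simp add: mult_ac)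
  have Lhi: "l1norm v \<le> real CARD('q) * b * s"
    unfolding L_eq using sum_mono[of UNIV "\<lambda>j. v $ j" "\<lambda>_. b * s", OF vhi] by (simp add: mult_ac)
  have ulo: "a * s \<le> (\<Sum>j\<in>UNIV. v $ j * x $ j)"
  proof -
    have "a * s = (\<Sum>j\<in>UNIV. a * s * x $ j)" using Bbar_sum[OF x] by (simp add: sum_distrib_left[symmetric])
    also have "\<dots> \<le> (\<Sum>j\<in>UNIV. v $ j * x $ j)" by (intro sum_mono mult_right_mono vlo xnn)
    finally show ?thesis .
  qed
  have uhi: "(\<Sum>j\<in>UNIV. v $ j * x $ j) \<le> b * s"
  proof -
    have "(\<Sum>j\<in>UNIV. v $ j * x $ j) \<le> (\<Sum>j\<in>UNIV. b * s * x $ j)" by (intro sum_mono mult_right_mono vhi xnn)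
    also have "\<dots> = b * s" using Bbar_sum[OF x] by (simp add: sum_distrib_left[symmetric])
    finally show ?thesis .
  qed
  have q1: "1 \<le> real CARD('q)" by simp
  show ?thesis
    unfolding u_eq v_def[symmetric]
    by (rule ln_ratio_bound[OF a ab q1 s_pos ulo uhi Llo Lhi])
qed

definition rs :: "real^'q^'q \<Rightarrow> 'q \<Rightarrow> real" where
  "rs A i = (\<Sum>j\<in>UNIV. A $ i $ j)"

definition cA :: "real^'q^'q \<Rightarrow> real" where
  "cA A = \<bar>ln (Min (range (rs A)))\<bar> + \<bar>ln (Max (range (rs A)))\<bar>"

lemma row_bound:
  assumes A: "rowpos A" and y: "y \<in> Bbar"
  shows "\<bar>ln (l1norm (transpose A *v y))\<bar> \<le> cA A"
proof -
  have Ann: "A $ i $ j \<ge> 0" for i j using A unfolding rowpos_def by auto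
  have ynn: "y $ i \<ge> 0" for i using y by (rule Bbar_nn)
  have rpos: "rs A i > 0" for i
  proof -
    obtain k where k: "A $ i $ k > 0" using A unfolding rowpos_def by blast
    show ?thesis unfolding rs_def by (rule sum_pos2[where i=k]) (use k Ann in auto)
  qed
  have tnn: "(transpose A *v y) $ j \<ge> 0" for j
    unfolding matrix_vector_mult_def transpose_def using Ann ynn by (simp add: sum_nonneg)
  have "l1norm (transpose A *v y) = (\<Sum>j\<in>UNIV. \<Sum>i\<in>UNIV. A $ i $ j * y $ i)"
    unfolding l1norm_nonneg_eq[OF tnn] by (simp add: matrix_vector_mult_def transpose_def)
  also have "\<dots> = (\<Sum>i\<in>UNIV. \<Sum>j\<in>UNIV. A $ i $ j * y $ i)" by (rule sum.swap)
  also have "\<dots> = (\<Sum>i\<in>UNIV. rs A i * y $ i)" by (simp add: rs_def sum_distrib_right)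
  finally have eq: "l1norm (transpose A *v y) = (\<Sum>i\<in>UNIV. rs A i * y $ i)" .
  define m where "m = Min (range (rs A))"
  define M where "M = Max (range (rs A))"
  have m: "m \<le> rs A i" for i unfolding m_def by simp
  have M: "rs A i \<le> M" for i unfolding M_def by simp
  have "m \<in> range (rs A)" unfolding m_def by (rule Min_in) auto
  then have mpos: "m > 0" using rpos by auto
  have lo: "m \<le> (\<Sum>i\<in>UNIV. rs A i * y $ i)"
  proof -
    have "m = (\<Sum>i\<in>UNIV. m * y $ i)" using Bbar_sum[OF y] by (simp add: sum_distrib_left[symmetric])
    also have "\<dots> \<le> (\<Sum>i\<in>UNIV. rs A i * y $ i)" by (intro sum_mono mult_right_mono m ynn)
    finally show ?thesis .
  qed
  have hi: "(\<Sum>i\<in>UNIV. rs A i * y $ i) \<le> M"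
  proof -
    have "(\<Sum>i\<in>UNIV. rs A i * y $ i) \<le> (\<Sum>i\<in>UNIV. M * y $ i)" by (intro sum_mono mult_right_mono M ynn)
    also have "\<dots> = M" using Bbar_sum[OF y] by (simp add: sum_distrib_left[symmetric])
    finally show ?thesis .
  qed
  have "ln m \<le> ln (l1norm (transpose A *v y))"
    unfolding eq using lo mpos by (subst ln_le_cancel_iff) auto
  moreover have "ln (l1norm (transpose A *v y)) \<le> ln M"
    unfolding eq using lo hi mpos by (subst ln_le_cancel_iff) auto
  ultimately show ?thesis unfolding cA_def m_def[symmetric] M_def[symmetric] by linarith
qed




lemma continuous_on_vec_nth' [continuous_intros]:
  fixes f :: "'c::topological_space \<Rightarrow> 'b::real_normed_vector^'q"
  shows "continuous_on S f \<Longrightarrow> continuous_on S (\<lambda>x. f x $ i)"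
  by (rule bounded_linear.continuous_on[OF bounded_linear_vec_nth])

lemma continuous_on_l1norm: "continuous_on S (l1norm :: real^'q \<Rightarrow> real)"
  unfolding l1norm_def[abs_def] by (intro continuous_intros)

lemma Bbar_compact: "compact (Bbar :: (real^'q) set)"
  unfolding compact_eq_bounded_closed
proof (intro conjI)
  show "bounded (Bbar :: (real^'q) set)"
    unfolding bounded_iff
  proof (intro exI ballI)
    fix x :: "real^'q" assume "x \<in> Bbar"
    then show "norm x \<le> 1" using norm_le_l1_cart[of x] unfolding Bbar_def l1norm_def by auto
  qed
  have "Bbar = {x::real^'q. \<forall>i. 0 \<le> x $ i} \<inter> {x. l1norm x = 1}" unfolding Bbar_def by auto
  moreover have "closed {x::real^'q. \<forall>i. 0 \<le> x $ i}"
    by (intro closed_Collect_all closed_Collect_le continuous_intros)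
  moreover have "closed {x::real^'q. l1norm x = 1}"
    by (intro closed_Collect_eq continuous_on_l1norm continuous_intros)
  ultimately show "closed (Bbar :: (real^'q) set)" by (metis closed_Int)
qed

lemma Bbar_convex: "convex (Bbar :: (real^'q) set)"
  unfolding convex_def
proof (intro ballI allI impI)
  fix x y :: "real^'q" and u v :: real
  assume x: "x \<in> Bbar" and y: "y \<in> Bbar" and uv: "0 \<le> u" "0 \<le> v" "u + v = 1"
  have nn: "\<forall>i. 0 \<le> (u *\<^sub>R x + v *\<^sub>R y) $ i" using x y uv unfolding Bbar_def by auto
  have "l1norm (u *\<^sub>R x + v *\<^sub>R y) = (\<Sum>i\<in>UNIV. u * x $ i + v * y $ i)"
    using nn by (subst l1norm_nonneg_eq) auto
  also have "\<dots> = u * (\<Sum>i\<in>UNIV. x $ i) + v * (\<Sum>i\<in>UNIV. y $ i)"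
    by (simp add: sum.distrib sum_distrib_left)
  also have "\<dots> = 1" using Bbar_sum[OF x] Bbar_sum[OF y] uv by simp
  finally show "u *\<^sub>R x + v *\<^sub>R y \<in> Bbar" using nn unfolding Bbar_def by auto
qed

lemma Bbar_ne: "(\<chi> i. 1 / real CARD('q)) \<in> (Bbar :: (real^'q) set)"
  unfolding Bbar_def l1norm_def by auto

lemma allpos_Ax_pos:
  assumes A: "allpos A" and x: "x \<in> Bbar" shows "(A *v x) $ i > 0"
proof -
  obtain j where j: "x $ j > 0" using Bbar_pos_ex[OF x] by blast
  show ?thesis unfolding matrix_vector_mult_def
    by (simp, rule sum_pos2[where i=j])
       (use A j Bbar_nn[OF x] in \<open>auto simp: allpos_def less_imp_le\<close>)
qed

lemma allpos_l1_pos: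
  assumes A: "allpos A" and x: "x \<in> Bbar" shows "l1norm (A *v x) > 0"
proof -
  have "l1norm (A *v x) = (\<Sum>i\<in>UNIV. (A *v x) $ i)"
    using allpos_Ax_pos[OF A x] by (intro l1norm_nonneg_eq less_imp_le)
  also have "\<dots> > 0" using allpos_Ax_pos[OF A x] by (intro sum_pos) auto
  finally show ?thesis .
qed

lemma perron:
  assumes A: "allpos (A :: real^'q^'q)"
  obtains x where "x \<in> Bbar" "A *v x = l1norm (A *v x) *\<^sub>R x" "l1norm (A *v x) > 0"
proof -
  define f where "f x = (1 / l1norm (A *v x)) *\<^sub>R (A *v x)" for x :: "real^'q"
  have cont: "continuous_on Bbar f"
    unfolding f_def
    by (intro continuous_intros continuous_on_divide continuous_on_compose2[OF continuous_on_l1norm])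
       (auto dest: allpos_l1_pos[OF A])
  have fim: "f \<in> Bbar \<rightarrow> Bbar"
  proof
    fix x :: "real^'q" assume x: "x \<in> Bbar"
    have L: "l1norm (A *v x) > 0" by (rule allpos_l1_pos[OF A x])
    have nn: "\<forall>i. 0 \<le> f x $ i" unfolding f_def using allpos_Ax_pos[OF A x] L by (auto intro: less_imp_le)
    have eqS: "(\<Sum>i\<in>UNIV. (A *v x) $ i) = l1norm (A *v x)"
      using allpos_Ax_pos[OF A x] by (intro l1norm_nonneg_eq[symmetric] less_imp_le)
    have "l1norm (f x) = (\<Sum>i\<in>UNIV. (1 / l1norm (A *v x)) * (A *v x) $ i)"
      using nn by (subst l1norm_nonneg_eq) (auto simp: f_def)
    also have "\<dots> = (1 / l1norm (A *v x)) * (\<Sum>i\<in>UNIV. (A *v x) $ i)"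
      by (rule sum_distrib_left[symmetric])
    also have "\<dots> = (1 / l1norm (A *v x)) * l1norm (A *v x)" by (simp only: eqS)
    also have "\<dots> = 1" using L by simp
    finally show "f x \<in> Bbar" using nn unfolding Bbar_def by auto
  qed
  obtain x where x: "x \<in> Bbar" "f x = x"
    using brouwer[OF Bbar_compact Bbar_convex _ cont fim] Bbar_ne by blast
  have L: "l1norm (A *v x) > 0" by (rule allpos_l1_pos[OF A x(1)])
  have "A *v x = l1norm (A *v x) *\<^sub>R f x" unfolding f_def using L by simp
  with x have "A *v x = l1norm (A *v x) *\<^sub>R x" by simp
  then show ?thesis using that x L by blast
qed




definition tot :: "real^'q^'q \<Rightarrow> real" where
  "tot A = (\<Sum>i\<in>UNIV. \<Sum>j\<in>UNIV. A $ i $ j)"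

lemma eig_bound:
  fixes A :: "real^'q^'q"
  assumes nn: "\<And>i j. A $ i $ j \<ge> 0" and v: "v \<noteq> 0" and ev: "cmat A *v v = l *s v"
  shows "cmod l \<le> tot A"
proof -
  define m where "m = Max (range (\<lambda>j. cmod (v $ j)))"
  have mge: "cmod (v $ j) \<le> m" for j unfolding m_def by simp
  have "m \<in> range (\<lambda>j. cmod (v $ j))" unfolding m_def by (rule Max_in) auto
  then obtain i where mi: "cmod (v $ i) = m" by auto
  obtain j0 where j0: "v $ j0 \<noteq> 0" using v by (metis vec_eq_iff zero_index)
  have "cmod (v $ j0) > 0" using j0 by simp
  then have mpos: "m > 0" using mge[of j0] by linarith
  have "cmod l * m = cmod ((l *s v) $ i)" by (simp add: norm_mult mi)
  also have "\<dots> = cmod ((cmat A *v v) $ i)" using ev by simp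
  also have "\<dots> = cmod (\<Sum>j\<in>UNIV. complex_of_real (A $ i $ j) * v $ j)"
    by (simp add: matrix_vector_mult_def cmat_def)
  also have "\<dots> \<le> (\<Sum>j\<in>UNIV. cmod (complex_of_real (A $ i $ j) * v $ j))" by (rule norm_sum)
  also have "\<dots> = (\<Sum>j\<in>UNIV. A $ i $ j * cmod (v $ j))" by (simp add: norm_mult nn)
  also have "\<dots> \<le> (\<Sum>j\<in>UNIV. A $ i $ j * m)" by (intro sum_mono mult_left_mono mge nn)
  also have "\<dots> = (\<Sum>j\<in>UNIV. A $ i $ j) * m" by (simp add: sum_distrib_right)
  also have "\<dots> \<le> tot A * m"
    unfolding tot_def using mpos
    by (intro mult_right_mono member_le_sum) (auto intro!: sum_nonneg nn)
  finally show ?thesis using mpos by simp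
qed

definition cpoly :: "real^'q^'q \<Rightarrow> complex poly" where
  "cpoly A = (\<Sum>p\<in>{p. p permutes (UNIV::'q set)}. of_int (sign p) *
      (\<Prod>i\<in>UNIV. [: cmat A $ i $ p i, (if p i = i then -1 else 0) :]))"

definition dmat :: "real^'q^'q \<Rightarrow> complex \<Rightarrow> complex^'q^'q" where
  "dmat A l = (\<chi> i j. cmat A $ i $ j - (if i = j then l else 0))"

lemma poly_cpoly: "poly (cpoly A) l = det (dmat A l)"
  unfolding cpoly_def det_def dmat_def
  by (auto simp: poly_sum poly_prod intro!: sum.cong arg_cong[where f="\<lambda>x. _ * x"] prod.cong)

lemma dmat_mult: "dmat A l *v v = cmat A *v v - l *s v"
  by (simp add: vec_eq_iff dmat_def matrix_vector_mult_def left_diff_distrib sum_subtractf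
        if_distrib[where f="\<lambda>x. x * _"] cong: if_cong)

lemma det_zero_iff: "det (B :: complex^'q^'q) = 0 \<longleftrightarrow> (\<exists>v. v \<noteq> 0 \<and> B *v v = 0)"
  using det_nz_iff_inj_gen[of "(*v) B"] vec.inj_iff_eq_0[of B] by auto

lemma eig_finite:
  fixes A :: "real^'q^'q"
  assumes nn: "\<And>i j. A $ i $ j \<ge> 0"
  shows "finite {l. \<exists>v. v \<noteq> 0 \<and> cmat A *v v = l *s v}"
proof -
  have sub: "{l. \<exists>v. v \<noteq> 0 \<and> cmat A *v v = l *s v} \<subseteq> {l. poly (cpoly A) l = 0}"
    by (auto simp: poly_cpoly det_zero_iff dmat_mult)
  have "cpoly A \<noteq> 0"
  proof
    assume "cpoly A = 0"
    then have "det (dmat A (of_real (tot A + 1))) = 0" using poly_cpoly[of A] by simp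
    then obtain v where "v \<noteq> 0" "cmat A *v v = of_real (tot A + 1) *s v"
      by (auto simp: det_zero_iff dmat_mult)
    from eig_bound[OF nn this] have "cmod (of_real (tot A + 1)) \<le> tot A" .
    moreover have "tot A \<ge> 0" unfolding tot_def by (auto intro!: sum_nonneg nn)
    ultimately show False by simp
  qed
  then show ?thesis using poly_roots_finite finite_subset[OF sub] by blast
qed

lemma spec_rad_bounds:
  fixes A :: "real^'q^'q"
  assumes A: "allpos A" and m: "\<And>j. m \<le> (\<Sum>i\<in>UNIV. A $ i $ j)"
  shows "m \<le> spec_rad A" "spec_rad A \<le> tot A"
proof -
  have nn: "A $ i $ j \<ge> 0" for i j using A unfolding allpos_def by (auto intro: less_imp_le)
  define E where "E = {cmod l | l. \<exists>v::complex^'q. v \<noteq> 0 \<and> cmat A *v v = l *s v}"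
  have E: "E = cmod ` {l. \<exists>v. v \<noteq> 0 \<and> cmat A *v v = l *s v}" unfolding E_def by auto
  have fin: "finite E" unfolding E using eig_finite[OF nn] by simp
  obtain x where x: "x \<in> Bbar" "A *v x = l1norm (A *v x) *\<^sub>R x" "l1norm (A *v x) > 0"
    using perron[OF A] by blast
  define v where "v = (\<chi> i. complex_of_real (x $ i))"
  have "v \<noteq> 0"
  proof
    assume "v = 0"
    then have "x $ i = 0" for i unfolding v_def by (metis of_real_eq_0_iff vec_lambda_beta zero_index)
    then show False using Bbar_sum[OF x(1)] by simp
  qed
  moreover have "cmat A *v v = complex_of_real (l1norm (A *v x)) *s v"
  proof -
    have "(cmat A *v v) $ i = complex_of_real ((A *v x) $ i)" for i
      by (simp add: matrix_vector_mult_def cmat_def v_def)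
    then show ?thesis using x(2) by (simp add: vec_eq_iff v_def)
  qed
  ultimately have inE: "l1norm (A *v x) \<in> E"
    unfolding E_def using x(3) by (auto intro!: exI[of _ "complex_of_real (l1norm (A *v x))"])
  have "spec_rad A = Max E" unfolding spec_rad_def E_def ..
  have lam: "m \<le> l1norm (A *v x)"
  proof -
    have "l1norm (A *v x) = (\<Sum>i\<in>UNIV. \<Sum>j\<in>UNIV. A $ i $ j * x $ j)"
      using Bbar_nn[OF x(1)] nn
      by (subst l1norm_nonneg_eq) (auto simp: matrix_vector_mult_def intro!: sum_nonneg)
    also have "\<dots> = (\<Sum>j\<in>UNIV. \<Sum>i\<in>UNIV. A $ i $ j * x $ j)" by (rule sum.swap)
    also have "\<dots> = (\<Sum>j\<in>UNIV. (\<Sum>i\<in>UNIV. A $ i $ j) * x $ j)" by (simp add: sum_distrib_right)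
    also have "\<dots> \<ge> (\<Sum>j\<in>UNIV. m * x $ j)" by (intro sum_mono mult_right_mono m Bbar_nn[OF x(1)])
    also have "(\<Sum>j\<in>UNIV. m * x $ j) = m" using Bbar_sum[OF x(1)] by (simp add: sum_distrib_left[symmetric])
    finally show ?thesis .
  qed
  show "m \<le> spec_rad A"
    unfolding \<open>spec_rad A = Max E\<close> using lam Max_ge[OF fin inE] by linarith
  show "spec_rad A \<le> tot A"
    unfolding \<open>spec_rad A = Max E\<close>
    using fin inE by (subst Max_le_iff) (auto simp: E_def intro: eig_bound[OF nn])
qed




lemma ln_K:
  fixes u L K :: real
  assumes "0 < u" "0 < L" "u \<le> K * L" "L \<le> K * u"
  shows "\<bar>ln u - ln L\<bar> \<le> ln K"
proof -
  have K: "K > 0" using assms by (smt (verit, best) mult_nonpos_nonneg)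
  have "ln u \<le> ln (K * L)" using assms K by (subst ln_le_cancel_iff) auto
  moreover have "ln L \<le> ln (K * u)" using assms K by (subst ln_le_cancel_iff) auto
  ultimately show ?thesis using K assms by (simp add: ln_mult)
qed

lemma sr_bound:
  fixes Q P :: "real^'q^'q"
  assumes Q: "rowpos Q" and a: "0 < a" and Pa: "\<And>i j. a \<le> P $ i $ j" and Pb: "\<And>i j. P $ i $ j \<le> b"
  shows "\<bar>ln (spec_rad (Q ** P)) - ln (l1norm (transpose (Q ** P) *v (\<chi> i. 1 / real CARD('q))))\<bar>
           \<le> ln (real CARD('q) * b / a)"
proof -
  define A where "A = Q ** P"
  define c where "c k = (\<Sum>i\<in>UNIV. Q $ i $ k)" for k
  define s where "s = (\<Sum>k\<in>UNIV. c k)"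
  define q where "q = real CARD('q)"
  have q: "q \<ge> 1" unfolding q_def by simp
  have Qnn: "Q $ i $ j \<ge> 0" for i j using Q unfolding rowpos_def by auto
  have cnn: "c k \<ge> 0" for k unfolding c_def using Qnn by (auto intro!: sum_nonneg)
  have ab: "a \<le> b" using Pa Pb order_trans by blast
  have Ppos: "allpos P" unfolding allpos_def using Pa a by (meson less_le_trans)
  have Apos: "allpos A" unfolding A_def by (rule rowpos_allpos[OF Q Ppos])
  have Ann: "A $ i $ j \<ge> 0" for i j using Apos unfolding allpos_def by (auto intro: less_imp_le)
  have s_pos: "s > 0"
  proof -
    obtain i0 :: 'q where True by blast
    obtain k where k: "Q $ i0 $ k > 0" using Q unfolding rowpos_def by blast
    have "c k > 0" unfolding c_def by (rule sum_pos2[where i=i0]) (use k Qnn in auto)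
    then show ?thesis unfolding s_def by (intro sum_pos2[where i=k]) (auto simp: cnn)
  qed
  have col: "(\<Sum>i\<in>UNIV. A $ i $ j) = (\<Sum>k\<in>UNIV. c k * P $ k $ j)" for j
  proof -
    have "(\<Sum>i\<in>UNIV. A $ i $ j) = (\<Sum>i\<in>UNIV. \<Sum>k\<in>UNIV. Q $ i $ k * P $ k $ j)"
      unfolding A_def by (simp add: matrix_matrix_mult_def)
    also have "\<dots> = (\<Sum>k\<in>UNIV. \<Sum>i\<in>UNIV. Q $ i $ k * P $ k $ j)" by (rule sum.swap)
    also have "\<dots> = (\<Sum>k\<in>UNIV. c k * P $ k $ j)" unfolding c_def by (simp add: sum_distrib_right)
    finally show ?thesis .
  qed
  have collo: "a * s \<le> (\<Sum>i\<in>UNIV. A $ i $ j)" for j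
  proof -
    have "a * s = (\<Sum>k\<in>UNIV. c k * a)" unfolding s_def by (simp add: sum_distrib_left mult_ac)
    also have "\<dots> \<le> (\<Sum>k\<in>UNIV. c k * P $ k $ j)" by (intro sum_mono mult_left_mono Pa cnn)
    finally show ?thesis by (simp add: col)
  qed
  have colhi: "(\<Sum>i\<in>UNIV. A $ i $ j) \<le> b * s" for j
  proof -
    have "(\<Sum>k\<in>UNIV. c k * P $ k $ j) \<le> (\<Sum>k\<in>UNIV. c k * b)" by (intro sum_mono mult_left_mono Pb cnn)
    also have "\<dots> = b * s" unfolding s_def by (simp add: sum_distrib_left mult_ac)
    finally show ?thesis by (simp add: col)
  qed
  have totc: "tot A = (\<Sum>j\<in>UNIV. \<Sum>i\<in>UNIV. A $ i $ j)" unfolding tot_def by (rule sum.swap)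
  have tothi: "tot A \<le> q * b * s"
    unfolding totc q_def using sum_mono[of UNIV "\<lambda>j. \<Sum>i\<in>UNIV. A $ i $ j" "\<lambda>_. b * s", OF colhi]
    by (simp add: mult_ac)
  have Lv: "l1norm (transpose A *v (\<chi> i. 1 / real CARD('q))) = tot A / q"
  proof -
    have "l1norm (transpose A *v (\<chi> i. 1 / real CARD('q))) = (\<Sum>j\<in>UNIV. \<Sum>i\<in>UNIV. A $ i $ j / q)"
      unfolding l1norm_def q_def
      by (intro sum.cong refl) (auto simp: matrix_vector_mult_def transpose_def Ann intro!: sum_nonneg abs_of_nonneg divide_nonneg_nonneg)
    also have "\<dots> = tot A / q" unfolding totc by (simp add: sum_divide_distrib)
    finally show ?thesis .
  qed
  have sr1: "a * s \<le> spec_rad A" by (rule spec_rad_bounds(1)[OF Apos collo])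
  have sr2: "spec_rad A \<le> tot A" by (rule spec_rad_bounds(2)[OF Apos collo])
  have as: "a * s > 0" using a s_pos by simp
  have totlo: "a * s \<le> tot A" using sr1 sr2 by linarith
  have K: "q * b / a \<ge> 1" using a ab q
    by (simp add: field_simps) (metis mult_le_cancel_right1 mult_right_mono order_trans less_imp_le linorder_not_le mult.commute)
  have L: "tot A / q > 0" using totlo as q by simp
  have "\<bar>ln (spec_rad A) - ln (tot A / q)\<bar> \<le> ln (q * b / a)"
  proof (rule ln_K)
    show "0 < spec_rad A" using sr1 as by linarith
    show "0 < tot A / q" by (rule L)
    show "spec_rad A \<le> q * b / a * (tot A / q)"
    proof -
      have "spec_rad A \<le> tot A" by (rule sr2)
      also have "\<dots> = 1 * (tot A)" by simp
      also have "\<dots> \<le> (b / a) * tot A" using ab a totlo as by (intro mult_right_mono) auto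
      also have "\<dots> = q * b / a * (tot A / q)" using q by simp
      finally show ?thesis .
    qed
    show "tot A / q \<le> q * b / a * spec_rad A"
    proof -
      have "tot A / q \<le> b * s" using tothi q by (simp add: field_simps)
      also have "\<dots> = (b / a) * (a * s)" using a by simp
      also have "\<dots> \<le> (q * b / a) * (a * s)"
        using q ab a as by (intro mult_right_mono divide_right_mono) (auto simp: mult_le_cancel_right1)
      also have "\<dots> \<le> (q * b / a) * spec_rad A" using sr1 K by (intro mult_left_mono) auto
      finally show ?thesis .
    qed
  qed
  then show ?thesis unfolding A_def[symmetric] Lv q_def .
qed




lemma hitT_lt: "hitT X \<omega> < \<infinity> \<longleftrightarrow> (\<exists>n\<ge>1. inS_pos (Xprod X n \<omega>))"
  unfolding hitT_def by auto

lemma omega_part: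
  fixes X :: "nat \<Rightarrow> 'a \<Rightarrow> real^'q^'q"
  assumes inS: "\<And>n. n \<ge> 1 \<Longrightarrow> inS (X n \<omega>)" and fin: "hitT X \<omega> < \<infinity>"
  shows "(\<forall>n. enat n \<ge> hitT X \<omega> \<longrightarrow> inS_pos (Xprod X n \<omega>))
        \<and> (\<exists>C. \<forall>n\<ge>1. \<forall>x\<in>Bbar. \<forall>y\<in>Bbar.
              \<bar>(if hitT X \<omega> \<le> enat n then ln (y \<bullet> (Xprod X n \<omega> *v x)) else 0)
                - ln (l1norm (Yprod X n \<omega> *v y))\<bar> \<le> C)
        \<and> (\<exists>C. \<forall>n\<ge>1.
              \<bar>ln (spec_rad (Xprod X n \<omega>))
                - ln (l1norm (Yprod X n \<omega> *v (\<chi> i. 1 / real CARD('q))))\<bar> \<le> C)"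
proof -
  have ex: "\<exists>n. n \<ge> 1 \<and> inS_pos (Xprod X n \<omega>)" using fin unfolding hitT_lt by blast
  define T where "T = (LEAST n. n \<ge> 1 \<and> inS_pos (Xprod X n \<omega>))"
  have hT: "hitT X \<omega> = enat T" unfolding hitT_def T_def using ex by auto
  have T1: "T \<ge> 1" "inS_pos (Xprod X T \<omega>)" using LeastI_ex[OF ex] unfolding T_def[symmetric] by auto
  define P where "P = Xprod X T \<omega>"
  have Ppos: "allpos P" using T1(2) unfolding P_def inS_pos_iff .
  define B where "B d = blk (\<lambda>i. X i \<omega>) T d" for d
  have split: "Xprod X (T + d) \<omega> = B d ** P" for d unfolding B_def P_def by (rule Xprod_split)
  have Brow: "rowpos (B d)" for d unfolding B_def
    by (rule blk_rowpos) (use T1 in \<open>auto intro!: inS_rowpos inS\<close>)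
  have Xrow: "rowpos (Xprod X n \<omega>)" for n unfolding Xprod_blk
    by (rule blk_rowpos) (auto intro!: inS_rowpos inS)
  define a where "a = Min (range (\<lambda>p. P $ fst p $ snd p))"
  define b where "b = Max (range (\<lambda>p. P $ fst p $ snd p))"
  have Pa: "a \<le> P $ i $ j" for i j unfolding a_def by (rule Min_le) (auto intro!: image_eqI[of _ _ "(i, j)"])
  have Pb: "P $ i $ j \<le> b" for i j unfolding b_def by (rule Max_ge) (auto intro!: image_eqI[of _ _ "(i, j)"])
  have "a \<in> range (\<lambda>p. P $ fst p $ snd p)" unfolding a_def by (rule Min_in) auto
  then have apos: "a > 0" using Ppos unfolding allpos_def by auto
  obtain i0 :: 'q where True by blast
  have ab: "a \<le> b" using Pa[of i0 i0] Pb[of i0 i0] by linarith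
  define C2 where "C2 = ln (real CARD('q) * b / a)"
  have C2: "C2 \<ge> 0"
  proof -
    have "1 * a \<le> real CARD('q) * b" using ab by (intro mult_mono) (use apos in auto)
    then show ?thesis unfolding C2_def using apos by (simp add: field_simps)
  qed
  have geT: "n = T + (n - T)" if "T \<le> n" for n using that by simp
  have part1: "\<forall>n. enat n \<ge> hitT X \<omega> \<longrightarrow> inS_pos (Xprod X n \<omega>)"
  proof (intro allI impI)
    fix n assume "hitT X \<omega> \<le> enat n"
    then have "T \<le> n" using hT by simp
    then have "Xprod X n \<omega> = B (n - T) ** P" using split[of "n - T"] geT by metis
    then show "inS_pos (Xprod X n \<omega>)" unfolding inS_pos_iff using rowpos_allpos[OF Brow Ppos] by simp
  qed
  have cAnn: "cA A \<ge> 0" for A :: "real^'q^'q" unfolding cA_def by simp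
  define S2 where "S2 = (\<Sum>n<T. cA (Xprod X n \<omega>))"
  have S2: "S2 \<ge> 0" unfolding S2_def by (intro sum_nonneg cAnn)
  have part2: "\<forall>n\<ge>1. \<forall>x\<in>Bbar. \<forall>y\<in>Bbar.
              \<bar>(if hitT X \<omega> \<le> enat n then ln (y \<bullet> (Xprod X n \<omega> *v x)) else 0)
                - ln (l1norm (Yprod X n \<omega> *v y))\<bar> \<le> S2 + C2"
  proof (intro allI impI ballI)
    fix n :: nat and x y :: "real^'q" assume n: "n \<ge> 1" and x: "x \<in> Bbar" and y: "y \<in> Bbar"
    show "\<bar>(if hitT X \<omega> \<le> enat n then ln (y \<bullet> (Xprod X n \<omega> *v x)) else 0)
                - ln (l1norm (Yprod X n \<omega> *v y))\<bar> \<le> S2 + C2"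
    proof (cases "T \<le> n")
      case True
      then have eq: "Xprod X n \<omega> = B (n - T) ** P" using split[of "n - T"] geT by metis
      have "\<bar>ln (y \<bullet> (Xprod X n \<omega> *v x)) - ln (l1norm (Yprod X n \<omega> *v y))\<bar> \<le> C2"
        unfolding Yprod_def eq C2_def by (rule main_bound[OF Brow apos Pa Pb x y])
      then show ?thesis using True hT S2 by simp
    next
      case False
      have "\<bar>ln (l1norm (Yprod X n \<omega> *v y))\<bar> \<le> cA (Xprod X n \<omega>)"
        unfolding Yprod_def by (rule row_bound[OF Xrow y])
      also have "\<dots> \<le> S2" unfolding S2_def using False
        by (intro member_le_sum cAnn) auto
      finally show ?thesis using False hT C2 by simp
    qed
  qed
  define S3 where "S3 = (\<Sum>n<T. \<bar>ln (spec_rad (Xprod X n \<omega>))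
                - ln (l1norm (Yprod X n \<omega> *v (\<chi> i. 1 / real CARD('q))))\<bar>)"
  have S3: "S3 \<ge> 0" unfolding S3_def by (intro sum_nonneg) auto
  have part3: "\<forall>n\<ge>1. \<bar>ln (spec_rad (Xprod X n \<omega>))
                - ln (l1norm (Yprod X n \<omega> *v (\<chi> i. 1 / real CARD('q))))\<bar> \<le> S3 + C2"
  proof (intro allI impI)
    fix n :: nat assume n: "n \<ge> 1"
    show "\<bar>ln (spec_rad (Xprod X n \<omega>))
                - ln (l1norm (Yprod X n \<omega> *v (\<chi> i. 1 / real CARD('q))))\<bar> \<le> S3 + C2"
    proof (cases "T \<le> n")
      case True
      then have eq: "Xprod X n \<omega> = B (n - T) ** P" using split[of "n - T"] geT by metis
      have "\<bar>ln (spec_rad (Xprod X n \<omega>))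
                - ln (l1norm (Yprod X n \<omega> *v (\<chi> i. 1 / real CARD('q))))\<bar> \<le> C2"
        unfolding Yprod_def eq C2_def by (rule sr_bound[OF Brow apos Pa Pb])
      then show ?thesis using S3 by simp
    next
      case False
      have "\<bar>ln (spec_rad (Xprod X n \<omega>))
                - ln (l1norm (Yprod X n \<omega> *v (\<chi> i. 1 / real CARD('q))))\<bar> \<le> S3"
        unfolding S3_def using False
        by (intro member_le_sum[of n "{..<T}" "\<lambda>n. \<bar>ln (spec_rad (Xprod X n \<omega>))
                - ln (l1norm (Yprod X n \<omega> *v (\<chi> i. 1 / real CARD('q))))\<bar>"]) auto
      then show ?thesis using C2 by simp
    qed
  qed
  show ?thesis using part1 part2 part3 by blast
qed




lemma cont_matmul: "continuous_on UNIV (\<lambda>x::(real^'q^'q) \<times> (real^'q^'q). fst x ** snd x)"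
  unfolding matrix_matrix_mult_def
  by (intro continuous_on_vec_lambda continuous_intros)

lemma meas_matmul:
  fixes f g :: "'b \<Rightarrow> real^'q^'q"
  assumes "f \<in> borel_measurable N" "g \<in> borel_measurable N"
  shows "(\<lambda>x. f x ** g x) \<in> borel_measurable N"
  by (rule borel_measurable_continuous_Pair[OF assms cont_matmul])

lemma meas_Xprod:
  assumes "\<And>n. n \<ge> 1 \<Longrightarrow> X n \<in> borel_measurable M"
  shows "Xprod X n \<in> borel_measurable M"
  by (induction n) (auto intro!: meas_matmul assms)

lemma meas_blk:
  assumes "\<And>i. a < i \<Longrightarrow> i \<le> a + d \<Longrightarrow> i \<in> K"
  shows "(\<lambda>f. blk f a d) \<in> borel_measurable (PiM K (\<lambda>_. (borel :: (real^'q^'q) measure)))"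
  using assms
proof (induction d)
  case 0 then show ?case by simp
next
  case (Suc d)
  have "(\<lambda>f. f (a + Suc d)) \<in> borel_measurable (PiM K (\<lambda>_. (borel :: (real^'q^'q) measure)))"
    using Suc.prems by (intro measurable_component_singleton) auto
  moreover have "(\<lambda>f. blk f a d) \<in> borel_measurable (PiM K (\<lambda>_. (borel :: (real^'q^'q) measure)))"
    using Suc by auto
  ultimately show ?case by (simp add: meas_matmul)
qed

definition Opos :: "(real^'q^'q) set" where "Opos = {A. allpos A}"

lemma open_Opos: "open (Opos :: (real^'q^'q) set)"
proof -
  define S where "S = {r::real^'q. \<forall>j. r $ j \<in> {0<..}}"
  have S: "open S" unfolding S_def by (rule open_vector_box) auto
  have "open {x::real^'q^'q. \<forall>i. x $ i \<in> S}" by (rule open_vector_box) (use S in auto)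
  moreover have "Opos = {x. \<forall>i. x $ i \<in> S}"
    unfolding Opos_def allpos_def S_def by auto
  ultimately show ?thesis by simp
qed

lemma Opos_sets: "Opos \<in> sets borel" "- Opos \<in> sets borel"
  using open_Opos by (auto intro: borel_open borel_comp)

lemma blk_shift: "blk f a d = blk (\<lambda>n. f (n + a)) 0 d"
  by (induction d) (auto simp: add.commute)




lemma zero_one:
  fixes M :: "'a measure" and X :: "nat \<Rightarrow> 'a \<Rightarrow> real^'q^'q"
  assumes P: "prob_space M"
    and meas: "\<And>n. n \<ge> 1 \<Longrightarrow> X n \<in> borel_measurable M"
    and ind: "prob_space.indep_vars M (\<lambda>_. borel) X {1..}"
    and dist: "\<And>n. n \<ge> 1 \<Longrightarrow> distr M borel (X n) = distr M borel (X 1)"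
    and S: "\<And>n \<omega>. n \<ge> 1 \<Longrightarrow> \<omega> \<in> space M \<Longrightarrow> inS (X n \<omega>)"
    and pos: "measure M {\<omega>\<in>space M. \<exists>n\<ge>1. inS_pos (Xprod X n \<omega>)} > 0"
  shows "measure M {\<omega>\<in>space M. \<exists>n\<ge>1. inS_pos (Xprod X n \<omega>)} = 1"
proof -
  interpret prob_space M by (rule P)
  define A where "A = {\<omega>\<in>space M. \<exists>n\<ge>1. inS_pos (Xprod X n \<omega>)}"
  define E where "E n = {\<omega>\<in>space M. inS_pos (Xprod X n \<omega>)}" for n
  have E_sets: "E n \<in> events" for n
  proof -
    have "E n = Xprod X n -` Opos \<inter> space M" unfolding E_def Opos_def by (auto simp: inS_pos_iff)
    then show ?thesis using measurable_sets[OF meas_Xprod[OF meas] Opos_sets(1)] by simp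
  qed
  have A_eq: "A = (\<Union>n. E (Suc n))"
  proof
    show "A \<subseteq> (\<Union>n. E (Suc n))"
    proof
      fix \<omega> assume "\<omega> \<in> A"
      then obtain n where n: "n \<ge> 1" "\<omega> \<in> space M" "inS_pos (Xprod X n \<omega>)" unfolding A_def by blast
      then have "\<omega> \<in> E (Suc (n - 1))" unfolding E_def by simp
      then show "\<omega> \<in> (\<Union>n. E (Suc n))" by blast
    qed
    show "(\<Union>n. E (Suc n)) \<subseteq> A" unfolding A_def E_def by force
  qed
  have A_sets: "A \<in> events" unfolding A_eq using E_sets by auto
  have "\<exists>N\<ge>1. prob (E N) > 0"
  proof (rule ccontr)
    assume nex: "\<not> (\<exists>N\<ge>1. prob (E N) > 0)"
    have z: "prob (E (Suc n)) = 0" for n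
    proof -
      have "\<not> prob (E (Suc n)) > 0" using nex by auto
      then show ?thesis using measure_nonneg[of M "E (Suc n)"] by linarith
    qed
    have ez: "emeasure M (E (Suc n)) = 0" for n using z[of n] by (simp add: emeasure_eq_measure)
    have "emeasure M (\<Union>n. E (Suc n)) = 0"
      by (rule emeasure_UN_eq_0) (use ez E_sets in auto)
    then have "prob A = 0" unfolding A_eq by (simp add: measure_def)
    with pos show False unfolding A_def by simp
  qed
  then obtain N where N: "N \<ge> 1" "prob (E N) > 0" by blast
  define p where "p = prob (E N)"
  define K where "K k = {k*N+1..k*N+N}" for k
  define W where "W k \<omega> = blk (\<lambda>i. X i \<omega>) (k*N) N" for k \<omega>
  define R where "R k \<omega> = restrict (\<lambda>i. X i \<omega>) (K k)" for k \<omega>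
  define g where "g k f = blk f (k*N) N" for k and f :: "nat \<Rightarrow> real^'q^'q"
  have Ksub: "K k \<subseteq> {1..}" for k unfolding K_def by auto
  have Kdisj: "disjoint_family_on K UNIV"
    unfolding disjoint_family_on_def
  proof (intro ballI impI)
    fix k l :: nat assume "k \<noteq> l"
    then consider "k < l" | "l < k" by linarith
    then show "K k \<inter> K l = {}"
    proof cases
      case 1
      then have "Suc k * N \<le> l * N" by (intro mult_le_mono1) simp
      then show ?thesis unfolding K_def by auto
    next
      case 2
      then have "Suc l * N \<le> k * N" by (intro mult_le_mono1) simp
      then show ?thesis unfolding K_def by auto
    qed
  qed
  have indR: "indep_vars (\<lambda>k. PiM (K k) (\<lambda>_. borel)) R UNIV"
    unfolding R_def by (rule indep_vars_restrict[OF ind]) (use Ksub Kdisj in auto)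
  have gmeas: "g k \<in> borel_measurable (PiM (K k) (\<lambda>_. borel))" for k
    unfolding g_def by (rule meas_blk) (auto simp: K_def)
  have WgR: "W k \<omega> = g k (R k \<omega>)" for k \<omega>
    unfolding W_def g_def R_def by (rule blk_cong) (auto simp: K_def)
  have indW: "indep_vars (\<lambda>_. borel) W UNIV"
  proof -
    have "indep_vars (\<lambda>_. borel) (\<lambda>k \<omega>. g k (R k \<omega>)) UNIV" by (rule indep_vars_compose2[OF indR gmeas])
    moreover have "(\<lambda>k \<omega>. g k (R k \<omega>)) = W" using WgR by (intro ext) simp
    ultimately show ?thesis by simp
  qed
  define G where "G = - (Opos :: (real^'q^'q) set)"
  have Gs: "G \<in> sets borel" unfolding G_def by (rule Opos_sets(2))
  define F where "F k = W k -` G \<inter> space M" for k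
  have F_sets: "F k \<in> events" for k
    unfolding F_def using indW Gs unfolding indep_vars_def by (auto intro: measurable_sets)
  have Fprod: "prob (\<Inter>k\<in>{..<Suc m}. F k) = (\<Prod>k\<in>{..<Suc m}. prob (F k))" for m
    unfolding F_def by (rule indep_varsD[OF indW]) (auto simp: Gs)
  define D where "D = distr M borel (X 1)"
  have dist'': "distr M borel (X n) = distr M borel (X (Suc 0))" if "Suc 0 \<le> n" for n
    using dist[of n] that by simp
  have Dprob: "prob_space D" unfolding D_def by (rule prob_space_distr) (rule meas, simp)
  have RD: "distr M (PiM (K k) (\<lambda>_. borel)) (R k) = PiM (K k) (\<lambda>_. D)" for k
  proof -
    define X' where "X' i = X (max 1 i)" for i
    have X'm: "random_variable borel (X' i)" for i unfolding X'_def by (rule meas) simp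
    have "indep_vars (\<lambda>_. borel) X (K k)" by (rule indep_vars_subset[OF ind Ksub])
    moreover have "indep_vars (\<lambda>_. borel) X (K k) = indep_vars (\<lambda>_. borel) X' (K k)"
      by (rule indep_vars_cong) (auto simp: X'_def K_def max_def)
    ultimately have indX': "indep_vars (\<lambda>_. borel) X' (K k)" by simp
    have Kne: "K k \<noteq> {}" using N by (auto simp: K_def)
    have "distr M (PiM (K k) (\<lambda>_. borel)) (\<lambda>x. \<lambda>i\<in>K k. X' i x) = PiM (K k) (\<lambda>i. distr M borel (X' i))"
      using indep_vars_iff_distr_eq_PiM[OF Kne X'm] indX' by simp
    moreover have "(\<lambda>x. \<lambda>i\<in>K k. X' i x) = R k"
      unfolding R_def by (intro ext restrict_ext) (auto simp: X'_def K_def max_def)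
    moreover have "PiM (K k) (\<lambda>i. distr M borel (X' i)) = PiM (K k) (\<lambda>_. D)"
      by (rule PiM_cong) (auto simp: X'_def D_def K_def max_def intro!: dist'')
    ultimately show ?thesis by simp
  qed
  have setsK: "sets (PiM (K k) (\<lambda>_. D)) = sets (PiM (K k) (\<lambda>_. borel))" for k
    by (rule sets_PiM_cong) (auto simp: D_def)
  have spK: "space (PiM (K k) (\<lambda>_. D)) = space (PiM (K k) (\<lambda>_. borel))" for k
    using setsK[of k] by (rule sets_eq_imp_space_eq)
  have Fk: "prob (F k) = measure (PiM (K k) (\<lambda>_. D)) (g k -` G \<inter> space (PiM (K k) (\<lambda>_. D)))" for k
  proof -
    have Rm: "R k \<in> measurable M (PiM (K k) (\<lambda>_. borel))" using indR unfolding indep_vars_def by auto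
    have Gs': "g k -` G \<inter> space (PiM (K k) (\<lambda>_. borel)) \<in> sets (PiM (K k) (\<lambda>_. borel))"
      using measurable_sets[OF gmeas Gs] by simp
    have "F k = R k -` (g k -` G \<inter> space (PiM (K k) (\<lambda>_. borel))) \<inter> space M"
      unfolding F_def using measurable_space[OF Rm] WgR by auto
    then have "prob (F k) = prob (R k -` (g k -` G \<inter> space (PiM (K k) (\<lambda>_. borel))) \<inter> space M)"
      by simp
    also have "\<dots> = measure (distr M (PiM (K k) (\<lambda>_. borel)) (R k)) (g k -` G \<inter> space (PiM (K k) (\<lambda>_. borel)))"
      by (rule measure_distr[symmetric, OF Rm Gs'])
    also have "\<dots> = measure (PiM (K k) (\<lambda>_. D)) (g k -` G \<inter> space (PiM (K k) (\<lambda>_. borel)))"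
      using RD by simp
    finally show ?thesis using spK by simp
  qed
  have shift: "measure (PiM (K k) (\<lambda>_. D)) (g k -` G \<inter> space (PiM (K k) (\<lambda>_. D)))
      = measure (PiM (K 0) (\<lambda>_. D)) (g 0 -` G \<inter> space (PiM (K 0) (\<lambda>_. D)))" for k
  proof -
    define s where "s f = (\<lambda>n\<in>K 0. f (n + k*N))" for f :: "nat \<Rightarrow> real^'q^'q"
    have dd: "distr (PiM (K k) (\<lambda>_. D)) (PiM (K 0) (\<lambda>_. D)) s = PiM (K 0) (\<lambda>_. D)"
      unfolding s_def using distr_PiM_reindex[of "K k" "\<lambda>_. D" "\<lambda>n. n + k*N" "K 0"] Dprob
      by (auto simp: K_def inj_on_def)
    have sm: "s \<in> measurable (PiM (K k) (\<lambda>_. D)) (PiM (K 0) (\<lambda>_. D))"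
      unfolding s_def by (intro measurable_restrict measurable_component_singleton) (auto simp: K_def)
    have g0m: "g 0 \<in> borel_measurable (PiM (K 0) (\<lambda>_. D))"
      using gmeas[of 0] measurable_cong_sets[OF setsK[of 0] refl] by blast
    have G0s: "g 0 -` G \<inter> space (PiM (K 0) (\<lambda>_. D)) \<in> sets (PiM (K 0) (\<lambda>_. D))"
      using measurable_sets[OF g0m Gs] by simp
    have pre: "s -` (g 0 -` G \<inter> space (PiM (K 0) (\<lambda>_. D))) \<inter> space (PiM (K k) (\<lambda>_. D))
        = g k -` G \<inter> space (PiM (K k) (\<lambda>_. D))"
    proof -
      have "g k f = g 0 (s f)" for f
      proof -
        have "g k f = blk (\<lambda>n. f (n + k*N)) 0 N" unfolding g_def by (rule blk_shift)
        also have "\<dots> = g 0 (s f)" unfolding g_def s_def mult_0 by (rule blk_cong) (auto simp: K_def)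
        finally show ?thesis .
      qed
      then show ?thesis using measurable_space[OF sm] by auto
    qed
    have "measure (PiM (K k) (\<lambda>_. D)) (g k -` G \<inter> space (PiM (K k) (\<lambda>_. D)))
        = measure (PiM (K k) (\<lambda>_. D)) (s -` (g 0 -` G \<inter> space (PiM (K 0) (\<lambda>_. D))) \<inter> space (PiM (K k) (\<lambda>_. D)))"
      using pre by simp
    also have "\<dots> = measure (distr (PiM (K k) (\<lambda>_. D)) (PiM (K 0) (\<lambda>_. D)) s) (g 0 -` G \<inter> space (PiM (K 0) (\<lambda>_. D)))"
      by (rule measure_distr[symmetric, OF sm G0s])
    also have "\<dots> = measure (PiM (K 0) (\<lambda>_. D)) (g 0 -` G \<inter> space (PiM (K 0) (\<lambda>_. D)))"
      using dd by simp
    finally show ?thesis .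
  qed
  have F0: "prob (F 0) = 1 - p"
  proof -
    have "F 0 = space M - E N"
      unfolding F_def E_def W_def G_def Opos_def using Xprod_blk[of X N, symmetric]
      by (auto simp: inS_pos_iff)
    then show ?thesis unfolding p_def using prob_compl[OF E_sets] by simp
  qed
  have Fall: "prob (F k) = 1 - p" for k using Fk[of k] shift[of k] Fk[of 0] F0 by simp
  have sub: "space M - A \<subseteq> (\<Inter>k\<in>{..<Suc m}. F k)" for m
  proof
    fix \<omega> assume \<omega>: "\<omega> \<in> space M - A"
    show "\<omega> \<in> (\<Inter>k\<in>{..<Suc m}. F k)"
    proof
      fix k assume "k \<in> {..<Suc m}"
      show "\<omega> \<in> F k"
      proof (rule ccontr)
        assume "\<omega> \<notin> F k"
        then have Wp: "allpos (W k \<omega>)" using \<omega> unfolding F_def G_def Opos_def by auto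
        have "colpos (Xprod X (k*N) \<omega>)" unfolding Xprod_blk
          by (rule blk_colpos) (use \<omega> in \<open>auto intro!: inS_colpos S\<close>)
        then have "allpos (W k \<omega> ** Xprod X (k*N) \<omega>)" by (rule allpos_colpos[OF Wp])
        then have "inS_pos (Xprod X (k*N + N) \<omega>)" unfolding W_def Xprod_split inS_pos_iff .
        moreover have "k*N + N \<ge> 1" using N by simp
        ultimately show False using \<omega> unfolding A_def by blast
      qed
    qed
  qed
  have bound: "prob (space M - A) \<le> (1 - p) ^ Suc m" for m
  proof -
    have "prob (space M - A) \<le> prob (\<Inter>k\<in>{..<Suc m}. F k)"
      by (rule finite_measure_mono[OF sub]) (auto intro!: sets.finite_INT F_sets)
    also have "\<dots> = (1 - p) ^ Suc m" unfolding Fprod by (simp add: Fall)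
    finally show ?thesis .
  qed
  have p1: "p \<le> 1" unfolding p_def by simp
  have p0: "p > 0" unfolding p_def using N by simp
  have lim: "(\<lambda>m. (1 - p) ^ Suc m) \<longlonglongrightarrow> 0"
    by (rule LIMSEQ_Suc[OF LIMSEQ_power_zero]) (use p0 p1 in simp)
  have "prob (space M - A) \<le> 0"
    by (rule tendsto_le[OF trivial_limit_sequentially lim tendsto_const]) (use bound in simp)
  then have "prob (space M - A) = 0" using measure_nonneg[of M "space M - A"] by linarith
  then have "prob A = 1" using prob_compl[OF A_sets] by simp
  then show ?thesis unfolding A_def .
qed



theorem mainTheorem2:
  fixes M :: "'a measure" and X :: "nat \<Rightarrow> 'a \<Rightarrow> real^'q^'q"
  assumes "prob_space M"
    and "\<And>n. n \<ge> 1 \<Longrightarrow> X n \<in> borel_measurable M"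
    and "prob_space.indep_vars M (\<lambda>_. borel) X {1..}"
    and "\<And>n. n \<ge> 1 \<Longrightarrow> distr M borel (X n) = distr M borel (X 1)"
    and "\<And>n \<omega>. n \<ge> 1 \<Longrightarrow> \<omega> \<in> space M \<Longrightarrow> inS (X n \<omega>)"
  shows "(measure M {\<omega>\<in>space M. \<exists>n\<ge>1. inS_pos (Xprod X n \<omega>)} > 0
            \<longleftrightarrow> measure M {\<omega>\<in>space M. hitT X \<omega> < \<infinity>} = 1)
     \<and> (\<forall>\<omega>\<in>space M. hitT X \<omega> < \<infinity> \<longrightarrow>
          (\<forall>n. enat n \<ge> hitT X \<omega> \<longrightarrow> inS_pos (Xprod X n \<omega>))
        \<and> (\<exists>C. \<forall>n\<ge>1. \<forall>x\<in>Bbar. \<forall>y\<in>Bbar.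
              \<bar>(if hitT X \<omega> \<le> enat n then ln (y \<bullet> (Xprod X n \<omega> *v x)) else 0)
                - ln (l1norm (Yprod X n \<omega> *v y))\<bar> \<le> C)
        \<and> (\<exists>C. \<forall>n\<ge>1.
              \<bar>ln (spec_rad (Xprod X n \<omega>))
                - ln (l1norm (Yprod X n \<omega> *v (\<chi> i. 1 / real CARD('q))))\<bar> \<le> C))"
proof -
  have eqset: "{\<omega>\<in>space M. hitT X \<omega> < \<infinity>} = {\<omega>\<in>space M. \<exists>n\<ge>1. inS_pos (Xprod X n \<omega>)}"
    by (simp only: hitT_lt)
  have p1: "measure M {\<omega>\<in>space M. \<exists>n\<ge>1. inS_pos (Xprod X n \<omega>)} > 0
            \<longleftrightarrow> measure M {\<omega>\<in>space M. hitT X \<omega> < \<infinity>} = 1"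
    unfolding eqset using zero_one[OF assms(1-5)] by auto
  have p2: "\<forall>\<omega>\<in>space M. hitT X \<omega> < \<infinity> \<longrightarrow>
          (\<forall>n. enat n \<ge> hitT X \<omega> \<longrightarrow> inS_pos (Xprod X n \<omega>))
        \<and> (\<exists>C. \<forall>n\<ge>1. \<forall>x\<in>Bbar. \<forall>y\<in>Bbar.
              \<bar>(if hitT X \<omega> \<le> enat n then ln (y \<bullet> (Xprod X n \<omega> *v x)) else 0)
                - ln (l1norm (Yprod X n \<omega> *v y))\<bar> \<le> C)
        \<and> (\<exists>C. \<forall>n\<ge>1.
              \<bar>ln (spec_rad (Xprod X n \<omega>))
                - ln (l1norm (Yprod X n \<omega> *v (\<chi> i. 1 / real CARD('q))))\<bar> \<le> C)"
  proof (intro ballI impI)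
    fix \<omega> assume "\<omega> \<in> space M" "hitT X \<omega> < \<infinity>"
    then show "(\<forall>n. enat n \<ge> hitT X \<omega> \<longrightarrow> inS_pos (Xprod X n \<omega>))
        \<and> (\<exists>C. \<forall>n\<ge>1. \<forall>x\<in>Bbar. \<forall>y\<in>Bbar.
              \<bar>(if hitT X \<omega> \<le> enat n then ln (y \<bullet> (Xprod X n \<omega> *v x)) else 0)
                - ln (l1norm (Yprod X n \<omega> *v y))\<bar> \<le> C)
        \<and> (\<exists>C. \<forall>n\<ge>1.
              \<bar>ln (spec_rad (Xprod X n \<omega>))
                - ln (l1norm (Yprod X n \<omega> *v (\<chi> i. 1 / real CARD('q))))\<bar> \<le> C)"
      using omega_part[of X \<omega>] assms(5) by blast
  qed
  show ?thesis using p1 p2 by blast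
qed

end
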